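(* Let $T$ be a term rewriting system that is disjoint and has no collapsing rules. Then every reduction sequence of $T$ is convergent (i.e. $T$ is infinitary strongly normalising, $SN^\infty$).
   Context: $T=(\Sigma,R)$ with $\Sigma$ a finite signature and $R$ a set of rules $l\to r$ over finite or infinite terms, $l$ finite and not a variable, variables of $r$ occurring in $l$. $T$ is disjoint iff the set of function symbols occurring in left-hand sides is disjoint from the set of function symbols occurring in right-hand sides. A rule $l\to r$ is collapsing iff $r$ is a variable. Terms are finite or infinite trees; $d(t,u)=0$ if $t=u$, else $2^{-k}$ with $k$ the least depth where they differ; limits w.r.t. $d$. A reduction step $a=\langle t,p,\mu,\sigma\rangle$ has $t|_p=\sigma l$, target $t[\sigma r]_p$, depth $|p|$. A reduction sequence is an empty sequence $id_t$ or a sequence $\langle a_\alpha\rangle_{\alpha<\beta}$ ($\beta>0$ an ordinal) of steps with $src(a_{\alpha+1})=tgt(a_\alpha)$ for $\alpha+1<\beta$ and, for each limit ordinal $\beta_0<\beta$: $\lim_{\alpha\to\beta_0}tgt(a_\alpha)$ exists and equals $src(a_{\beta_0})$, and for every $n<\omega$ there is $\beta'<\beta_0$ such that every $a_\alpha$ with $\beta'<\alpha<\beta_0$ has depth $>n$. It is convergent iff it is empty, $\beta$ is a successor, or $\beta$ is a limit and $\lim_{\alpha\to\beta}tgt(a_\alpha)$ exists and the depth condition also holds at $\beta$. *)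

theory Defs
  imports Complex_Main "HOL-Library.BNF_Corec"
begin

codatatype ('f, 'v) iterm = Var 'v | Fun 'f "('f, 'v) iterm list"

corec subst :: "('v \<Rightarrow> ('f, 'v) iterm) \<Rightarrow> ('f, 'v) iterm \<Rightarrow> ('f, 'v) iterm" where
  "subst \<sigma> t = (case t of Var x \<Rightarrow> \<sigma> x | Fun f ts \<Rightarrow> Fun f (map (subst \<sigma>) ts))"

primrec subt :: "('f, 'v) iterm \<Rightarrow> nat list \<Rightarrow> ('f, 'v) iterm option" where
  "subt t [] = Some t"
| "subt t (i # p) = (case t of Var x \<Rightarrow> None
     | Fun f ts \<Rightarrow> (if i < length ts then subt (ts ! i) p else None))"

primrec replace :: "('f, 'v) iterm \<Rightarrow> nat list \<Rightarrow> ('f, 'v) iterm \<Rightarrow> ('f, 'v) iterm" where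
  "replace t [] s = s"
| "replace t (i # p) s = (case t of Var x \<Rightarrow> t
     | Fun f ts \<Rightarrow> (if i < length ts then Fun f (ts[i := replace (ts ! i) p s]) else t))"

fun root :: "('f, 'v) iterm \<Rightarrow> ('f \<times> nat) + 'v" where
  "root (Var x) = Inr x"
| "root (Fun f ts) = Inl (f, length ts)"

definition lab :: "('f, 'v) iterm \<Rightarrow> nat list \<Rightarrow> (('f \<times> nat) + 'v) option" where
  "lab t p = map_option root (subt t p)"

definition dterm :: "('f, 'v) iterm \<Rightarrow> ('f, 'v) iterm \<Rightarrow> real" where
  "dterm t u = (if t = u then 0
     else (1/2) ^ (LEAST k. \<exists>p. length p = k \<and> lab t p \<noteq> lab u p))"

definition funs :: "('f, 'v) iterm \<Rightarrow> 'f set" where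
  "funs t = {f. \<exists>p ts. subt t p = Some (Fun f ts)}"

definition vars :: "('f, 'v) iterm \<Rightarrow> 'v set" where
  "vars t = {x. \<exists>p. subt t p = Some (Var x)}"

inductive finite_term :: "('f, 'v) iterm \<Rightarrow> bool" where
  "finite_term (Var x)"
| "(\<And>t. t \<in> set ts \<Longrightarrow> finite_term t) \<Longrightarrow> finite_term (Fun f ts)"

definition wf_term :: "'f set \<Rightarrow> ('f \<Rightarrow> nat) \<Rightarrow> ('f, 'v) iterm \<Rightarrow> bool" where
  "wf_term \<Sigma> ar t \<longleftrightarrow> (\<forall>p f ts. subt t p = Some (Fun f ts) \<longrightarrow> f \<in> \<Sigma> \<and> length ts = ar f)"

type_synonym ('f, 'v) rule = "('f, 'v) iterm \<times> ('f, 'v) iterm"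

definition is_trs :: "'f set \<Rightarrow> ('f \<Rightarrow> nat) \<Rightarrow> ('f, 'v) rule set \<Rightarrow> bool" where
  "is_trs \<Sigma> ar R \<longleftrightarrow> finite \<Sigma> \<and>
     (\<forall>(l, r) \<in> R. wf_term \<Sigma> ar l \<and> wf_term \<Sigma> ar r \<and> finite_term l \<and>
        (\<forall>x. l \<noteq> Var x) \<and> vars r \<subseteq> vars l)"

definition disjoint_trs :: "('f, 'v) rule set \<Rightarrow> bool" where
  "disjoint_trs R \<longleftrightarrow> (\<Union>(l, r) \<in> R. funs l) \<inter> (\<Union>(l, r) \<in> R. funs r) = {}"

definition collapsing :: "('f, 'v) rule \<Rightarrow> bool" where
  "collapsing \<mu> \<longleftrightarrow> (\<exists>x. snd \<mu> = Var x)"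

type_synonym ('f, 'v) step = "('f, 'v) iterm \<times> nat list \<times> ('f, 'v) rule \<times> ('v \<Rightarrow> ('f, 'v) iterm)"

definition is_step :: "'f set \<Rightarrow> ('f \<Rightarrow> nat) \<Rightarrow> ('f, 'v) rule set \<Rightarrow> ('f, 'v) step \<Rightarrow> bool" where
  "is_step \<Sigma> ar R a \<longleftrightarrow> (case a of (t, p, (l, r), \<sigma>) \<Rightarrow>
     wf_term \<Sigma> ar t \<and> (l, r) \<in> R \<and> subt t p = Some (subst \<sigma> l))"

definition src :: "('f, 'v) step \<Rightarrow> ('f, 'v) iterm" where
  "src a = fst a"

definition tgt :: "('f, 'v) step \<Rightarrow> ('f, 'v) iterm" where
  "tgt a = (case a of (t, p, (l, r), \<sigma>) \<Rightarrow> replace t p (subst \<sigma> r))"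

definition depth :: "('f, 'v) step \<Rightarrow> nat" where
  "depth a = length (fst (snd a))"

text \<open>Ordinals are represented by elements of an arbitrary well-ordered type \<open>'o\<close>;
  a sequence of length \<open>\<beta>\<close> is indexed by \<open>{\<alpha>. \<alpha> < \<beta>}\<close>.\<close>

definition is_succ :: "'o::wellorder \<Rightarrow> bool" where
  "is_succ \<beta> \<longleftrightarrow> (\<exists>\<gamma><\<beta>. \<not> (\<exists>\<delta>. \<gamma> < \<delta> \<and> \<delta> < \<beta>))"

definition is_limit :: "'o::wellorder \<Rightarrow> bool" where
  "is_limit \<beta> \<longleftrightarrow> (\<exists>\<gamma>. \<gamma> < \<beta>) \<and> \<not> is_succ \<beta>"

definition converges_to :: "('o::wellorder \<Rightarrow> ('f, 'v) iterm) \<Rightarrow> 'o \<Rightarrow> ('f, 'v) iterm \<Rightarrow> bool" where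
  "converges_to f \<beta> t \<longleftrightarrow>
     (\<forall>e>0. \<exists>\<beta>'<\<beta>. \<forall>\<alpha>. \<beta>' < \<alpha> \<and> \<alpha> < \<beta> \<longrightarrow> dterm (f \<alpha>) t < e)"

definition depth_cond :: "('o::wellorder \<Rightarrow> ('f, 'v) step) \<Rightarrow> 'o \<Rightarrow> bool" where
  "depth_cond a \<beta> \<longleftrightarrow>
     (\<forall>n::nat. \<exists>\<beta>'<\<beta>. \<forall>\<alpha>. \<beta>' < \<alpha> \<and> \<alpha> < \<beta> \<longrightarrow> depth (a \<alpha>) > n)"

text \<open>A reduction sequence of length \<open>\<beta>\<close> (the empty one when \<open>\<beta>\<close> is the least element).\<close>
definition red_seq :: "'f set \<Rightarrow> ('f \<Rightarrow> nat) \<Rightarrow> ('f, 'v) rule set \<Rightarrow>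
    'o::wellorder \<Rightarrow> ('o \<Rightarrow> ('f, 'v) step) \<Rightarrow> bool" where
  "red_seq \<Sigma> ar R \<beta> a \<longleftrightarrow>
     (\<forall>\<alpha><\<beta>. is_step \<Sigma> ar R (a \<alpha>)) \<and>
     (\<forall>\<alpha> \<gamma>. \<gamma> < \<beta> \<and> \<alpha> < \<gamma> \<and> \<not> (\<exists>\<delta>. \<alpha> < \<delta> \<and> \<delta> < \<gamma>) \<longrightarrow> src (a \<gamma>) = tgt (a \<alpha>)) \<and>
     (\<forall>\<beta>0<\<beta>. is_limit \<beta>0 \<longrightarrow>
        converges_to (\<lambda>\<alpha>. tgt (a \<alpha>)) \<beta>0 (src (a \<beta>0)) \<and> depth_cond a \<beta>0)"

definition convergent :: "'o::wellorder \<Rightarrow> ('o \<Rightarrow> ('f, 'v) step) \<Rightarrow> bool" where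
  "convergent \<beta> a \<longleftrightarrow>
     \<not> (\<exists>\<gamma>. \<gamma> < \<beta>) \<or> is_succ \<beta> \<or>
     (is_limit \<beta> \<and> (\<exists>t. converges_to (\<lambda>\<alpha>. tgt (a \<alpha>)) \<beta> t) \<and> depth_cond a \<beta>)"

end

theory Submission imports Defs "HOL-Library.Sublist" begin

lemma lab_Nil[simp]: "lab t [] = Some (root t)"
  by (simp add: lab_def)

lemma lab_Var_Cons[simp]: "lab (Var x) (i # q) = None"
  by (simp add: lab_def)

lemma lab_Fun_Cons[simp]: "lab (Fun f ts) (i # q) = (if i < length ts then lab (ts ! i) q else None)"
  by (simp add: lab_def)

lemma lab_ext: "(\<forall>p. lab t p = lab u p) \<Longrightarrow> t = u"
proof (coinduction arbitrary: t u)
  case Eq_iterm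
  have r: "root t = root u" using Eq_iterm[rule_format, of "[]"] by simp
  show ?case
  proof (cases t)
    case (Var x)
    then show ?thesis using r by (cases u) auto
  next
    case (Fun f ts)
    then obtain us where u: "u = Fun f us" and l: "length us = length ts" using r by (cases u) auto
    have "list_all2 (\<lambda>a b. \<exists>t u. a = t \<and> b = u \<and> (\<forall>p. lab t p = lab u p)) ts us"
    proof (rule list_all2_all_nthI)
      fix i assume "i < length ts"
      then show "\<exists>t' u'. ts ! i = t' \<and> us ! i = u' \<and> (\<forall>p. lab t' p = lab u' p)"
        using Eq_iterm Fun u l by (metis lab_Fun_Cons)
    qed (use l in simp)
    then show ?thesis using Fun u by simp
  qed
qed

lemma lab_replace_other: "\<not> prefix p q \<Longrightarrow> lab (replace t p s) q = lab t q"
proof (induction p arbitrary: t q)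
  case Nil then show ?case by simp
next
  case (Cons i ps)
  show ?case
  proof (cases t)
    case (Var x) then show ?thesis by simp
  next
    case (Fun f ts)
    show ?thesis
    proof (cases "i < length ts")
      case True
      show ?thesis
      proof (cases q)
        case Nil then show ?thesis using Fun True by simp
      next
        case (Cons j qs)
        show ?thesis
        proof (cases "j = i")
          case True
          then have "\<not> prefix ps qs" using Cons.prems \<open>q = j # qs\<close> by simp
          then show ?thesis using Fun \<open>i < length ts\<close> Cons.IH \<open>q = j # qs\<close> True by simp
        next
          case False
          then show ?thesis using Fun \<open>i < length ts\<close> \<open>q = j # qs\<close> by simp
        qed
      qed
    next
      case False then show ?thesis using Fun by simp
    qed
  qed
qed

lemma subt_replace_same: "subt t p \<noteq> None \<Longrightarrow> subt (replace t p s) p = Some s"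
proof (induction p arbitrary: t)
  case Nil then show ?case by simp
next
  case (Cons i ps)
  then show ?case by (cases t) (auto split: if_splits)
qed

lemma subt_exists_prefix:
  "(\<forall>p'. strict_prefix p' p \<longrightarrow> lab u p' = lab t p') \<Longrightarrow> subt t p \<noteq> None \<Longrightarrow> subt u p \<noteq> None"
proof (induction p arbitrary: t u)
  case Nil then show ?case by simp
next
  case (Cons i ps)
  have r: "root u = root t" using Cons.prems(1)[rule_format, of "[]"] by simp
  obtain f ts where t: "t = Fun f ts" and i: "i < length ts" and s: "subt (ts ! i) ps \<noteq> None"
    using Cons.prems(2) by (cases t) (auto split: if_splits)
  obtain us where u: "u = Fun f us" and l: "length us = length ts" using r t by (cases u) auto
  have "\<forall>p'. strict_prefix p' ps \<longrightarrow> lab (us ! i) p' = lab (ts ! i) p'"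
  proof (intro allI impI)
    fix p' assume "strict_prefix p' ps"
    then have "strict_prefix (i # p') (i # ps)" by simp
    then have "lab u (i # p') = lab t (i # p')" using Cons.prems(1) by blast
    then show "lab (us ! i) p' = lab (ts ! i) p'" using t u l i by simp
  qed
  then have "subt (us ! i) ps \<noteq> None" using Cons.IH s by blast
  then show ?case using u l i by simp
qed

lemma finite_positions: "finite {q. length q = n \<and> subt t q \<noteq> None}"
proof (induction n arbitrary: t)
  case 0 then show ?case by simp
next
  case (Suc n)
  show ?case
  proof (cases t)
    case (Var x)
    have "{q. length q = Suc n \<and> subt t q \<noteq> None} = {}"
      using Var by (auto simp: length_Suc_conv)
    then show ?thesis by (metis finite.emptyI)
  next
    case (Fun f ts)
    have "{q. length q = Suc n \<and> subt t q \<noteq> None} \<subseteq>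
       (\<Union>i<length ts. (\<lambda>q. i # q) ` {q. length q = n \<and> subt (ts ! i) q \<noteq> None})"
      using Fun by (auto simp: length_Suc_conv split: if_splits)
    moreover have "finite (\<Union>i<length ts. (\<lambda>q. i # q) ` {q. length q = n \<and> subt (ts ! i) q \<noteq> None})"
      using Suc.IH by auto
    ultimately show ?thesis by (rule finite_subset)
  qed
qed

definition chld :: "nat \<Rightarrow> ('f,'v) iterm \<Rightarrow> ('f,'v) iterm" where
 "chld i t = (case t of Fun f ts \<Rightarrow> ts ! i | Var x \<Rightarrow> t)"

corec lt :: "(nat \<Rightarrow> ('f,'v) iterm) \<Rightarrow> ('f,'v) iterm" where
 "lt g = (case g 0 of Var x \<Rightarrow> Var x | Fun h ts \<Rightarrow> Fun h (map (\<lambda>i. lt (\<lambda>k. chld i (g (Suc k)))) [0..<length ts]))"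

definition coh :: "(nat \<Rightarrow> ('f,'v) iterm) \<Rightarrow> bool" where
  "coh g \<longleftrightarrow> (\<forall>k p. length p \<le> k \<longrightarrow> lab (g k) p = lab (g (Suc k)) p)"

lemma coh_chain: "coh g \<Longrightarrow> length p \<le> k \<Longrightarrow> lab (g k) p = lab (g (length p)) p"
proof (induction k)
  case 0 then show ?case by simp
next
  case (Suc k)
  show ?case
  proof (cases "length p \<le> k")
    case True
    then show ?thesis using Suc unfolding coh_def by metis
  next
    case False
    then have "length p = Suc k" using Suc.prems by simp
    then show ?thesis by simp
  qed
qed

lemma lab_lt: "coh g \<Longrightarrow> lab (lt g) p = lab (g (length p)) p"
proof (induction p arbitrary: g)
  case Nil
  then show ?case by (subst lt.code) (cases "g 0"; simp)
next
  case (Cons i ps)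
  have r: "\<And>m. root (g m) = root (g 0)"
    using coh_chain[OF Cons.prems, of "[]"] by simp
  show ?case
  proof (cases "g 0")
    case (Var x)
    then have "g (Suc (length ps)) = Var x" using r[of "Suc (length ps)"] by (cases "g (Suc (length ps))") auto
    then show ?thesis using Var by (subst lt.code) simp
  next
    case (Fun h ts)
    obtain ts' where g': "g (Suc (length ps)) = Fun h ts'" and l': "length ts' = length ts"
      using r[of "Suc (length ps)"] Fun by (cases "g (Suc (length ps))") auto
    show ?thesis
    proof (cases "i < length ts")
      case False
      then show ?thesis using Fun g' l' by (subst lt.code) simp
    next
      case True
      define gi where "gi = (\<lambda>k. chld i (g (Suc k)))"
      have gi_lab: "lab (gi k) p' = lab (g (Suc k)) (i # p')" for k and p' :: "nat list"
      proof -
        obtain us where "g (Suc k) = Fun h us" "length us = length ts"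
          using r[of "Suc k"] Fun by (cases "g (Suc k)") auto
        then show ?thesis using True by (simp add: gi_def chld_def)
      qed
      have "coh gi" unfolding coh_def
      proof (intro allI impI)
        fix k and p' :: "nat list" assume "length p' \<le> k"
        then have "length (i # p') \<le> Suc k" by simp
        then show "lab (gi k) p' = lab (gi (Suc k)) p'"
          using Cons.prems unfolding coh_def gi_lab by blast
      qed
      then have "lab (lt gi) ps = lab (gi (length ps)) ps" using Cons.IH by blast
      moreover have "lab (lt g) (i # ps) = lab (lt gi) ps"
        using Fun True by (subst lt.code) (simp add: gi_def)
      ultimately show ?thesis using gi_lab by simp
    qed
  qed
qed

lemma dterm_small:
  assumes "\<forall>p. length p \<le> n \<longrightarrow> lab t p = lab u p"
  shows "dterm t u < (1/2)^n"
proof (cases "t = u")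
  case True then show ?thesis by (simp add: dterm_def)
next
  case False
  then obtain p where p: "lab t p \<noteq> lab u p" using lab_ext by blast
  let ?P = "\<lambda>k. \<exists>p. length p = k \<and> lab t p \<noteq> lab u p"
  have "?P (length p)" using p by blast
  then have "?P (LEAST k. ?P k)" by (rule LeastI)
  then have "n < (LEAST k. ?P k)" using assms by (metis not_le)
  then have "(1/2::real) ^ (LEAST k. ?P k) < (1/2)^n"
    by (intro power_strict_decreasing) auto
  then show ?thesis using False by (simp add: dterm_def)
qed

lemma dterm_small_lab:
  assumes "dterm t u < (1/2)^n" "length p \<le> n"
  shows "lab t p = lab u p"
proof (rule ccontr)
  assume ne: "lab t p \<noteq> lab u p"
  then have tu: "t \<noteq> u" by auto
  let ?P = "\<lambda>k. \<exists>p. length p = k \<and> lab t p \<noteq> lab u p"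
  have "(LEAST k. ?P k) \<le> length p" using ne by (intro Least_le) blast
  then have "(LEAST k. ?P k) \<le> n" using assms(2) by simp
  then have "(1/2::real)^n \<le> (1/2) ^ (LEAST k. ?P k)"
    by (intro power_decreasing) auto
  then show False using assms(1) tu by (simp add: dterm_def)
qed

definition pos :: "('f, 'v) step \<Rightarrow> nat list" where
  "pos x = fst (snd x)"

definition LSYM :: "('f, 'v) rule set \<Rightarrow> 'f set" where
  "LSYM R = (\<Union>(l, r) \<in> R. funs l)"
definition RSYM :: "('f, 'v) rule set \<Rightarrow> 'f set" where
  "RSYM R = (\<Union>(l, r) \<in> R. funs r)"

lemma depth_pos: "depth x = length (pos x)"
  by (simp add: depth_def pos_def)

lemma step_other:
  assumes "is_step \<Sigma> ar R x" "\<not> prefix (pos x) q"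
  shows "lab (tgt x) q = lab (src x) q"
proof -
  obtain t p l r \<sigma> where x: "x = (t, p, (l, r), \<sigma>)" by (metis prod.exhaust)
  show ?thesis using assms x lab_replace_other[of p q t]
    by (simp add: tgt_def src_def pos_def)
qed

lemma root_subst_Fun: "root (subst \<sigma> (Fun f ts)) = Inl (f, length ts)"
  by (subst subst.code) simp

lemma funs_Fun: "f \<in> funs (Fun f ts)"
  unfolding funs_def by (rule CollectI, rule exI[of _ "[]"]) simp

lemma step_src_lab:
  assumes "is_trs \<Sigma> ar R" "is_step \<Sigma> ar R x"
  shows "\<exists>g k. lab (src x) (pos x) = Some (Inl (g, k)) \<and> g \<in> LSYM R"
proof -
  obtain t p l r \<sigma> where x: "x = (t, p, (l, r), \<sigma>)" by (metis prod.exhaust)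
  have lr: "(l, r) \<in> R" and s: "subt t p = Some (subst \<sigma> l)"
    using assms(2) x by (auto simp: is_step_def)
  have "\<forall>y. l \<noteq> Var y" using assms(1) lr unfolding is_trs_def by blast
  then obtain g ls where l: "l = Fun g ls" by (cases l) auto
  have "g \<in> LSYM R" unfolding LSYM_def using lr l funs_Fun by fastforce
  moreover have "lab (src x) (pos x) = Some (root (subst \<sigma> (Fun g ls)))"
    using s x l by (simp add: lab_def src_def pos_def)
  ultimately show ?thesis using root_subst_Fun[of \<sigma> g ls] by auto
qed

lemma step_tgt_lab:
  assumes "\<forall>\<mu>\<in>R. \<not> collapsing \<mu>" "is_step \<Sigma> ar R x"
  shows "\<exists>f k. lab (tgt x) (pos x) = Some (Inl (f, k)) \<and> f \<in> RSYM R"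
proof -
  obtain t p l r \<sigma> where x: "x = (t, p, (l, r), \<sigma>)" by (metis prod.exhaust)
  have lr: "(l, r) \<in> R" and s: "subt t p = Some (subst \<sigma> l)"
    using assms(2) x by (auto simp: is_step_def)
  have "\<forall>y. r \<noteq> Var y" using assms(1) lr unfolding collapsing_def by fastforce
  then obtain f rs where r: "r = Fun f rs" by (cases r) auto
  have "f \<in> RSYM R" unfolding RSYM_def using lr r funs_Fun by fastforce
  moreover have "subt (tgt x) p = Some (subst \<sigma> r)"
    using x s subt_replace_same[of t p] by (simp add: tgt_def)
  then have "lab (tgt x) (pos x) = Some (root (subst \<sigma> (Fun f rs)))"
    using x r by (simp add: lab_def pos_def)
  ultimately show ?thesis using root_subst_Fun[of \<sigma> f rs] by auto
qed

lemma step_src_tgt_ne: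
  assumes "is_trs \<Sigma> ar R" "disjoint_trs R" "\<forall>\<mu>\<in>R. \<not> collapsing \<mu>"
    "is_step \<Sigma> ar R x" "is_step \<Sigma> ar R y"
  shows "lab (src y) (pos y) \<noteq> lab (tgt x) (pos x)"
proof -
  obtain g k where g: "lab (src y) (pos y) = Some (Inl (g, k))" "g \<in> LSYM R"
    using step_src_lab[OF assms(1,5)] by blast
  obtain f k' where f: "lab (tgt x) (pos x) = Some (Inl (f, k'))" "f \<in> RSYM R"
    using step_tgt_lab[OF assms(3,4)] by blast
  have "LSYM R \<inter> RSYM R = {}" using assms(2) by (simp add: disjoint_trs_def LSYM_def RSYM_def)
  then show ?thesis using f g by auto
qed

lemma step_subt:
  assumes "is_step \<Sigma> ar R x" shows "subt (src x) (pos x) \<noteq> None"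
  using assms by (auto simp: is_step_def src_def pos_def split: prod.splits)

lemma succ_or_limit:
  fixes \<gamma> :: "'o::wellorder"
  assumes "\<alpha> < \<gamma>"
  shows "(\<exists>\<delta>0<\<gamma>. \<not> (\<exists>\<delta>. \<delta>0 < \<delta> \<and> \<delta> < \<gamma>)) \<or> is_limit \<gamma>"
  using assms unfolding is_limit_def is_succ_def by blast

lemma limit_between:
  fixes \<gamma> :: "'o::wellorder"
  assumes "is_limit \<gamma>" "\<epsilon> < \<gamma>"
  shows "\<exists>\<delta>. \<epsilon> < \<delta> \<and> \<delta> < \<gamma>"
  using assms unfolding is_limit_def is_succ_def by blast

lemma G:
  fixes \<beta> :: "'o::wellorder"
  assumes rs: "red_seq \<Sigma> ar R \<beta> a"
  shows "\<gamma> < \<beta> \<Longrightarrow> \<alpha> < \<gamma> \<Longrightarrow> (\<forall>\<delta>. \<alpha> < \<delta> \<and> \<delta> < \<gamma> \<longrightarrow> \<not> prefix (pos (a \<delta>)) q)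
    \<Longrightarrow> lab (src (a \<gamma>)) q = lab (tgt (a \<alpha>)) q"
proof (induction \<gamma> rule: less_induct)
  case (less \<gamma>)
  have steps: "\<And>\<delta>. \<delta> < \<beta> \<Longrightarrow> is_step \<Sigma> ar R (a \<delta>)" using rs by (simp add: red_seq_def)
  have succ: "\<And>\<delta> \<gamma>. \<gamma> < \<beta> \<Longrightarrow> \<delta> < \<gamma> \<Longrightarrow> \<not> (\<exists>\<epsilon>. \<delta> < \<epsilon> \<and> \<epsilon> < \<gamma>) \<Longrightarrow> src (a \<gamma>) = tgt (a \<delta>)"
    using rs unfolding red_seq_def by blast
  from succ_or_limit[OF less.prems(2)] show ?case
  proof
    assume "\<exists>\<delta>0<\<gamma>. \<not> (\<exists>\<delta>. \<delta>0 < \<delta> \<and> \<delta> < \<gamma>)"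
    then obtain \<delta>0 where d0: "\<delta>0 < \<gamma>" "\<not> (\<exists>\<delta>. \<delta>0 < \<delta> \<and> \<delta> < \<gamma>)" by blast
    have e: "src (a \<gamma>) = tgt (a \<delta>0)" using succ[OF less.prems(1) d0] .
    consider "\<delta>0 = \<alpha>" | "\<alpha> < \<delta>0" | "\<delta>0 < \<alpha>" by fastforce
    then show ?case
    proof cases
      case 1 then show ?thesis using e by simp
    next
      case 2
      have "lab (tgt (a \<delta>0)) q = lab (src (a \<delta>0)) q"
        using step_other[OF steps] 2 d0 less.prems by (meson order.strict_trans)
      moreover have "lab (src (a \<delta>0)) q = lab (tgt (a \<alpha>)) q"
        using less.IH[OF d0(1)] 2 d0 less.prems by (meson order.strict_trans)
      ultimately show ?thesis using e by simp
    next
      case 3 then show ?thesis using d0 less.prems(2) by blast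
    qed
  next
    assume lim: "is_limit \<gamma>"
    then have conv: "converges_to (\<lambda>\<alpha>. tgt (a \<alpha>)) \<gamma> (src (a \<gamma>))"
      using rs less.prems(1) unfolding red_seq_def by blast
    obtain \<beta>'' where b: "\<beta>'' < \<gamma>" "\<forall>\<alpha>. \<beta>'' < \<alpha> \<and> \<alpha> < \<gamma> \<longrightarrow> dterm (tgt (a \<alpha>)) (src (a \<gamma>)) < (1/2)^length q"
      using conv unfolding converges_to_def by (meson zero_less_divide_1_iff zero_less_numeral zero_less_power)
    obtain \<delta> where d: "max \<beta>'' \<alpha> < \<delta>" "\<delta> < \<gamma>"
      using limit_between[OF lim, of "max \<beta>'' \<alpha>"] b(1) less.prems(2) by auto
    have "lab (tgt (a \<delta>)) q = lab (src (a \<gamma>)) q"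
      using dterm_small_lab[OF b(2)[rule_format, of \<delta>], of q] d by auto
    moreover have "lab (tgt (a \<delta>)) q = lab (src (a \<delta>)) q"
      using step_other[OF steps] d less.prems by (meson max.strict_boundedE order.strict_trans)
    moreover have "lab (src (a \<delta>)) q = lab (tgt (a \<alpha>)) q"
      using less.IH[OF d(2)] d less.prems by (meson max.strict_boundedE order.strict_trans)
    ultimately show ?case by simp
  qed
qed

lemma prefix_same_len: "prefix xs ys \<Longrightarrow> length xs = length ys \<Longrightarrow> xs = ys"
  by (auto simp: prefix_def)

lemma depth_tail:
  fixes \<beta> :: "'o::wellorder"
  assumes trs: "is_trs \<Sigma> ar R" and disj: "disjoint_trs R" and nc: "\<forall>\<mu>\<in>R. \<not> collapsing \<mu>"
    and rs: "red_seq \<Sigma> ar R \<beta> a" and lim: "is_limit \<beta>"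
  shows "\<exists>\<beta>'<\<beta>. \<forall>\<alpha>. \<beta>' < \<alpha> \<and> \<alpha> < \<beta> \<longrightarrow> n \<le> depth (a \<alpha>)"
proof (induction n)
  case 0
  then show ?case using lim unfolding is_limit_def by auto
next
  case (Suc n)
  have steps: "\<And>\<delta>. \<delta> < \<beta> \<Longrightarrow> is_step \<Sigma> ar R (a \<delta>)" using rs by (simp add: red_seq_def)
  obtain \<beta>' where b': "\<beta>' < \<beta>" "\<forall>\<alpha>. \<beta>' < \<alpha> \<and> \<alpha> < \<beta> \<longrightarrow> n \<le> depth (a \<alpha>)"
    using Suc.IH by blast
  obtain \<alpha>1 where a1: "\<beta>' < \<alpha>1" "\<alpha>1 < \<beta>" using limit_between[OF lim b'(1)] by blast
  show ?case
  proof (rule ccontr)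
    assume H: "\<not> (\<exists>\<beta>''<\<beta>. \<forall>\<alpha>. \<beta>'' < \<alpha> \<and> \<alpha> < \<beta> \<longrightarrow> Suc n \<le> depth (a \<alpha>))"
    define S where "S = {\<alpha>. \<alpha>1 < \<alpha> \<and> \<alpha> < \<beta> \<and> depth (a \<alpha>) = n}"
    define Q where "Q = {q. length q = n \<and> subt (tgt (a \<alpha>1)) q \<noteq> None}"
    have dge: "n \<le> depth (a \<delta>)" if "\<alpha>1 < \<delta>" "\<delta> < \<beta>" for \<delta>
      using b'(2) a1 that by (meson order.strict_trans)
    have "(\<lambda>\<alpha>. pos (a \<alpha>)) ` S \<subseteq> Q"
    proof
      fix p assume "p \<in> (\<lambda>\<alpha>. pos (a \<alpha>)) ` S"
      then obtain \<alpha> where \<alpha>: "\<alpha> \<in> S" "p = pos (a \<alpha>)" by blast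
      have len: "length p = n" using \<alpha> by (simp add: S_def depth_pos)
      have "subt (src (a \<alpha>)) p \<noteq> None" using \<alpha> step_subt[OF steps] by (simp add: S_def)
      moreover have "\<forall>p'. strict_prefix p' p \<longrightarrow> lab (tgt (a \<alpha>1)) p' = lab (src (a \<alpha>)) p'"
      proof (intro allI impI)
        fix p' assume sp: "strict_prefix p' p"
        then have lp: "length p' < n" using len prefix_length_less by blast
        have "\<forall>\<delta>. \<alpha>1 < \<delta> \<and> \<delta> < \<alpha> \<longrightarrow> \<not> prefix (pos (a \<delta>)) p'"
        proof (intro allI impI notI)
          fix \<delta> assume d: "\<alpha>1 < \<delta> \<and> \<delta> < \<alpha>" and pr: "prefix (pos (a \<delta>)) p'"
          have "\<delta> < \<beta>" using d \<alpha> by (auto simp: S_def)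
          then have "n \<le> length (pos (a \<delta>))" using dge d by (simp add: depth_pos)
          moreover have "length (pos (a \<delta>)) \<le> length p'" using pr prefix_length_le by blast
          ultimately show False using lp by simp
        qed
        then show "lab (tgt (a \<alpha>1)) p' = lab (src (a \<alpha>)) p'"
          using G[OF rs, of \<alpha> \<alpha>1 p'] \<alpha> by (simp add: S_def)
      qed
      ultimately have "subt (tgt (a \<alpha>1)) p \<noteq> None" using subt_exists_prefix by blast
      then show "p \<in> Q" using len by (simp add: Q_def)
    qed
    moreover have "finite Q" unfolding Q_def by (rule finite_positions)
    ultimately have fin_img: "finite ((\<lambda>\<alpha>. pos (a \<alpha>)) ` S)" by (rule finite_subset)
    have key: False if "\<alpha> \<in> S" "\<gamma> \<in> S" "\<alpha> < \<gamma>" "pos (a \<gamma>) = pos (a \<alpha>)" for \<alpha> \<gamma>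
    proof -
      define p where "p = pos (a \<alpha>)"
      let ?P = "\<lambda>\<delta>. \<alpha> < \<delta> \<and> \<delta> < \<beta> \<and> depth (a \<delta>) = n \<and> pos (a \<delta>) = p"
      have P\<gamma>: "?P \<gamma>" using that by (simp add: S_def p_def)
      define \<gamma>' where "\<gamma>' = (LEAST \<delta>. ?P \<delta>)"
      have P\<gamma>': "?P \<gamma>'" unfolding \<gamma>'_def using P\<gamma> by (rule LeastI)
      have a1\<alpha>: "\<alpha>1 < \<alpha>" "\<alpha> < \<beta>" using that by (auto simp: S_def)
      have "\<forall>\<delta>. \<alpha> < \<delta> \<and> \<delta> < \<gamma>' \<longrightarrow> \<not> prefix (pos (a \<delta>)) p"
      proof (intro allI impI notI)
        fix \<delta> assume d: "\<alpha> < \<delta> \<and> \<delta> < \<gamma>'" and pr: "prefix (pos (a \<delta>)) p"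
        have db: "\<delta> < \<beta>" using d P\<gamma>' by auto
        have "n \<le> length (pos (a \<delta>))" using dge[of \<delta>] d db a1\<alpha> by (metis depth_pos order.strict_trans)
        moreover have lp: "length p = n" using that(1) by (simp add: S_def p_def depth_pos)
        moreover have "length (pos (a \<delta>)) \<le> length p" using pr prefix_length_le by blast
        ultimately have "pos (a \<delta>) = p" using pr prefix_same_len by (metis le_antisym)
        then have "?P \<delta>" using d db \<open>n \<le> length (pos (a \<delta>))\<close> lp \<open>length (pos (a \<delta>)) \<le> length p\<close>
          by (simp add: depth_pos)
        then have "\<gamma>' \<le> \<delta>" unfolding \<gamma>'_def by (rule Least_le)
        then show False using d by (simp add: not_le[symmetric])
      qed
      then have "lab (src (a \<gamma>')) p = lab (tgt (a \<alpha>)) p"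
        using G[OF rs, of \<gamma>' \<alpha> p] P\<gamma>' by blast
      moreover have "lab (src (a \<gamma>')) (pos (a \<gamma>')) \<noteq> lab (tgt (a \<alpha>)) (pos (a \<alpha>))"
        using step_src_tgt_ne[OF trs disj nc steps steps] P\<gamma>' a1\<alpha> by blast
      ultimately show False using P\<gamma>' by (simp add: p_def)
    qed
    have inj: "inj_on (\<lambda>\<alpha>. pos (a \<alpha>)) S"
    proof (rule inj_onI)
      fix \<alpha> \<gamma> assume "\<alpha> \<in> S" "\<gamma> \<in> S" "pos (a \<alpha>) = pos (a \<gamma>)"
      then show "\<alpha> = \<gamma>" using key by (metis linorder_neq_iff)
    qed
    have finS: "finite S" using inj fin_img finite_imageD by blast
    define M where "M = Max (insert \<alpha>1 S)"
    have M: "M < \<beta>" using finS a1 by (auto simp: M_def S_def)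
    obtain \<alpha> where \<alpha>: "M < \<alpha>" "\<alpha> < \<beta>" "depth (a \<alpha>) < Suc n" using H M by (meson not_le)
    have "\<alpha>1 \<le> M" using finS by (simp add: M_def)
    then have "\<alpha>1 < \<alpha>" using \<alpha> by simp
    then have "n \<le> depth (a \<alpha>)" using dge \<alpha> by blast
    then have "\<alpha> \<in> S" using \<open>\<alpha>1 < \<alpha>\<close> \<alpha> by (simp add: S_def)
    then have "\<alpha> \<le> M" using finS by (simp add: M_def)
    then show False using \<alpha> by simp
  qed
qed

lemma stab_lt:
  fixes \<beta> :: "'o::wellorder"
  assumes rs: "red_seq \<Sigma> ar R \<beta> a"
    and b: "\<forall>\<alpha>. b0 < \<alpha> \<and> \<alpha> < \<beta> \<longrightarrow> n < depth (a \<alpha>)"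
    and "b0 < \<alpha>" "\<alpha> < \<gamma>" "\<gamma> < \<beta>" "length q \<le> n"
  shows "lab (tgt (a \<alpha>)) q = lab (tgt (a \<gamma>)) q"
proof -
  have steps: "\<And>\<delta>. \<delta> < \<beta> \<Longrightarrow> is_step \<Sigma> ar R (a \<delta>)" using rs by (simp add: red_seq_def)
  have np: "\<not> prefix (pos (a \<delta>)) q" if "b0 < \<delta>" "\<delta> < \<beta>" for \<delta>
  proof
    assume "prefix (pos (a \<delta>)) q"
    then have "length (pos (a \<delta>)) \<le> n" using prefix_length_le assms(6) order_trans by blast
    then show False using b that by (simp add: depth_pos not_le[symmetric])
  qed
  have "lab (src (a \<gamma>)) q = lab (tgt (a \<alpha>)) q"
    using G[OF rs, of \<gamma> \<alpha> q] np assms by (meson order.strict_trans)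
  moreover have "lab (tgt (a \<gamma>)) q = lab (src (a \<gamma>)) q"
    using step_other[OF steps[of \<gamma>]] np[of \<gamma>] assms by (meson order.strict_trans)
  ultimately show ?thesis by simp
qed

lemma stab:
  fixes \<beta> :: "'o::wellorder"
  assumes rs: "red_seq \<Sigma> ar R \<beta> a"
    and b: "\<forall>\<alpha>. b0 < \<alpha> \<and> \<alpha> < \<beta> \<longrightarrow> n < depth (a \<alpha>)"
    and "b0 < \<alpha>" "b0 < \<gamma>" "\<alpha> < \<beta>" "\<gamma> < \<beta>" "length q \<le> n"
  shows "lab (tgt (a \<alpha>)) q = lab (tgt (a \<gamma>)) q"
  using stab_lt[OF rs b] assms by (metis linorder_neq_iff)

lemma limit_convergent:
  fixes \<beta> :: "'o::wellorder"
  assumes trs: "is_trs \<Sigma> ar R" and disj: "disjoint_trs R" and nc: "\<forall>\<mu>\<in>R. \<not> collapsing \<mu>"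
    and rs: "red_seq \<Sigma> ar R \<beta> a" and lim: "is_limit \<beta>"
  shows "convergent \<beta> a"
proof -
  have dt: "\<forall>n. \<exists>b. b < \<beta> \<and> (\<forall>\<alpha>. b < \<alpha> \<and> \<alpha> < \<beta> \<longrightarrow> n < depth (a \<alpha>))"
  proof
    fix n
    obtain b where "b < \<beta>" "\<forall>\<alpha>. b < \<alpha> \<and> \<alpha> < \<beta> \<longrightarrow> Suc n \<le> depth (a \<alpha>)"
      using depth_tail[OF trs disj nc rs lim, of "Suc n"] by blast
    then show "\<exists>b. b < \<beta> \<and> (\<forall>\<alpha>. b < \<alpha> \<and> \<alpha> < \<beta> \<longrightarrow> n < depth (a \<alpha>))" by (metis Suc_le_eq)
  qed
  then have dc: "depth_cond a \<beta>" unfolding depth_cond_def by blast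
  from dt obtain bb where bb: "\<And>n. bb n < \<beta>" "\<And>n \<alpha>. bb n < \<alpha> \<Longrightarrow> \<alpha> < \<beta> \<Longrightarrow> n < depth (a \<alpha>)"
    by metis
  define B where "B k = Max (bb ` {..k})" for k
  have B1: "B k < \<beta>" for k unfolding B_def using bb(1) by (subst Max_less_iff) auto
  have B2: "j \<le> k \<Longrightarrow> bb j \<le> B k" for j k unfolding B_def by (intro Max_ge) auto
  have "\<forall>k. \<exists>x. B k < x \<and> x < \<beta>" using limit_between[OF lim B1] by blast
  then obtain al where al: "\<And>k. B k < al k" "\<And>k. al k < \<beta>" by metis
  define f where "f k = tgt (a (al k))" for k
  have bbal: "bb j < al k" if "j \<le> k" for j k using B2[OF that] al(1)[of k] by simp
  have stab': "lab (tgt (a \<alpha>)) q = lab (tgt (a \<gamma>)) q"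
    if "bb n < \<alpha>" "bb n < \<gamma>" "\<alpha> < \<beta>" "\<gamma> < \<beta>" "length q \<le> n" for n \<alpha> \<gamma> q
    using stab[OF rs _ that] bb(2) by blast
  have "coh f" unfolding coh_def f_def
  proof (intro allI impI)
    fix k and p :: "nat list" assume "length p \<le> k"
    then show "lab (tgt (a (al k))) p = lab (tgt (a (al (Suc k)))) p"
      using stab'[of k "al k" "al (Suc k)" p] bbal al(2) by simp
  qed
  define L where "L = lt f"
  have labL: "lab L q = lab (f (length q)) q" for q unfolding L_def using lab_lt[OF \<open>coh f\<close>] .
  have conv: "converges_to (\<lambda>\<alpha>. tgt (a \<alpha>)) \<beta> L" unfolding converges_to_def
  proof (intro allI impI)
    fix e :: real assume e: "e > 0"
    obtain n where n: "(1/2::real)^n < e" using real_arch_pow_inv[OF e, of "1/2"] by auto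
    have "\<forall>\<alpha>. B n < \<alpha> \<and> \<alpha> < \<beta> \<longrightarrow> dterm (tgt (a \<alpha>)) L < e"
    proof (intro allI impI)
      fix \<alpha> assume \<alpha>: "B n < \<alpha> \<and> \<alpha> < \<beta>"
      have "dterm (tgt (a \<alpha>)) L < (1/2)^n"
      proof (rule dterm_small, intro allI impI)
        fix p :: "nat list" assume lp: "length p \<le> n"
        have "bb (length p) < \<alpha>" using B2[OF lp] \<alpha> by (meson order.strict_trans1)
        then show "lab (tgt (a \<alpha>)) p = lab L p"
          unfolding labL f_def using stab'[of "length p" \<alpha> "al (length p)" p] bbal al(2) \<alpha> by simp
      qed
      then show "dterm (tgt (a \<alpha>)) L < e" using n by simp
    qed
    then show "\<exists>\<beta>'<\<beta>. \<forall>\<alpha>. \<beta>' < \<alpha> \<and> \<alpha> < \<beta> \<longrightarrow> dterm (tgt (a \<alpha>)) L < e" using B1 by blast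
  qed
  show ?thesis unfolding convergent_def using lim conv dc by blast
qed

theorem mainTheorem11:
  fixes \<Sigma> :: "'f set" and ar :: "'f \<Rightarrow> nat" and R :: "('f, 'v) rule set"
  assumes "is_trs \<Sigma> ar R"
    and "disjoint_trs R"
    and "\<forall>\<mu>\<in>R. \<not> collapsing \<mu>"
  shows "\<forall>(\<beta>::'o::wellorder) a. red_seq \<Sigma> ar R \<beta> a \<longrightarrow> convergent \<beta> a"
proof (intro allI impI)
  fix \<beta> :: 'o and a assume rs: "red_seq \<Sigma> ar R \<beta> a"
  show "convergent \<beta> a"
  proof (cases "is_limit \<beta>")
    case True
    then show ?thesis using limit_convergent[OF assms rs] by blast
  next
    case False
    then show ?thesis unfolding convergent_def is_limit_def by blast
  qed
qed

end
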